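(* Let $k'\geq 2$, $h\geq 1$ and $r$ be integers with $1\leq r\leq k'-1$, and let $n'=hk'+r$. Then there exist positive integers $s$ and $k$ such that $C_{sk}^k$ has a minor isomorphic to $C_{n'}^{k'}$ if and only if $r\leq h-1$.
   Context: For integers $n\geq2$, $1\leq k\leq n-1$, $\mathbb{Z}_n=\{0,\dots,n-1\}$ with addition modulo $n$, and $C_n^k$ is the $n\times n$ circulant $0,1$ matrix whose $i$-th row ($i\in\mathbb{Z}_n$) is the incidence vector of $\{i,i+1,\dots,i+k-1\}$ (mod $n$). For a $0,1$ matrix $A$ with columns indexed by $\mathbb{Z}_n$ and $N\subset\mathbb{Z}_n$, the minor $A/N$ (obtained by contraction of $N$) is the submatrix obtained by removing the columns indexed by $N$ and then removing all dominating rows (a row $v$ is dominating if $v\geq u$ for some other row $u\neq v$). "Minor" always means a minor obtained by contraction; two matrices are isomorphic if one is obtained from the other by permuting rows and columns. *)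

theory Defs
  imports Main
begin

text \<open>A 0,1 matrix is represented by its column index set together with the
  set of its rows, each row being given by its support (a set of column indices).\<close>

type_synonym matrix01 = "nat set \<times> nat set set"

definition circ :: "nat \<Rightarrow> nat \<Rightarrow> matrix01" where
  "circ n k = ({0..<n}, {{(i + j) mod n | j. j < k} | i. i < n})"

definition contract :: "matrix01 \<Rightarrow> nat set \<Rightarrow> matrix01" where
  "contract A N =
     (let R = (\<lambda>v. v - N) ` snd A
      in (fst A - N, {v \<in> R. \<not> (\<exists>u\<in>R. u \<noteq> v \<and> u \<subseteq> v)}))"

text \<open>Isomorphism: permutation of rows and columns.\<close>
definition iso01 :: "matrix01 \<Rightarrow> matrix01 \<Rightarrow> bool" where
  "iso01 A B \<longleftrightarrow> (\<exists>f. bij_betw f (fst A) (fst B) \<and> (\<lambda>v. f ` v) ` snd A = snd B)"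

definition has_minor_iso :: "matrix01 \<Rightarrow> matrix01 \<Rightarrow> bool" where
  "has_minor_iso A B \<longleftrightarrow> (\<exists>N. N \<subseteq> fst A \<and> iso01 (contract A N) B)"

end

theory Submission
  imports Defs "HOL-Number_Theory.Cong"
begin


definition win :: "nat \<Rightarrow> nat \<Rightarrow> nat \<Rightarrow> nat set" where
  "win n k a = {(a + j) mod n | j. j < k}"

lemma circ_rows: "snd (circ n k) = win n k ` {0..<n}"
  by (auto simp: circ_def win_def)

lemma circ_cols: "fst (circ n k) = {0..<n}"
  by (simp add: circ_def)

lemma win_mod: "win n k (a mod n) = win n k a"
  by (auto simp: win_def mod_add_left_eq)

lemma win_sub: "0 < n \<Longrightarrow> win n k a \<subseteq> {0..<n}"
  by (auto simp: win_def)

lemma add_mod_cancel: "(a + b) mod (m::nat) = (a + c) mod m \<Longrightarrow> b mod m = c mod m"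
  using cong_add_lcancel_nat unfolding cong_def by blast

lemma win_image: "win n k a = (\<lambda>j. (a + j) mod n) ` {0..<k}"
  by (auto simp: win_def)

lemma card_win: assumes "k \<le> n" shows "card (win n k a) = k"
proof -
  have "inj_on (\<lambda>j. (a + j) mod n) {0..<k}"
  proof (rule inj_onI)
    fix x y assume "x \<in> {0..<k}" "y \<in> {0..<k}" "(a + x) mod n = (a + y) mod n"
    then show "x = y" using add_mod_cancel[of a x n y] assms by simp
  qed
  then show ?thesis by (simp add: win_image card_image)
qed

lemma fin_win: "finite (win n k a)"
  by (simp add: win_image)

lemma win_mem: "x \<in> win n k a \<longleftrightarrow> (\<exists>j<k. x = (a + j) mod n)"
  by (auto simp: win_def)

lemma win_inj_aux:
  assumes "0 < k" "k < n" "i < i'" "i' < n" "win n k i = win n k i'"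
  shows False
proof -
  have "i \<in> win n k i" unfolding win_mem using assms by (intro exI[of _ 0]) simp
  then have "i \<in> win n k i'" using assms by simp
  then obtain j where j: "j < k" "i = (i' + j) mod n" by (auto simp: win_mem)
  have "i' \<in> win n k i'" unfolding win_mem using assms by (intro exI[of _ 0]) simp
  then have "i' \<in> win n k i" using assms by simp
  then obtain j' where j': "j' < k" "i' = (i + j') mod n" by (auto simp: win_mem)
  have "i + j' < n"
  proof (rule ccontr)
    assume "\<not> i + j' < n"
    then have "i' = i + j' - n" using j' assms by (simp add: le_mod_geq)
    then show False using assms j' by linarith
  qed
  then have i'eq: "i' = i + j'" using j' by simp
  have "\<not> i' + j < n"
  proof
    assume "i' + j < n" then have "i = i' + j" using j by simp
    then show False using assms by linarith
  qed
  then have ieq: "i = i' + j - n" using j assms by (simp add: le_mod_geq)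
  have j1: "j \<ge> 1" using ieq assms \<open>\<not> i' + j < n\<close> by linarith
  define p where "p = (i + (n - 1)) mod n"
  have "p \<in> win n k i'"
    unfolding win_mem p_def
    apply (rule exI[of _ "j - 1"])
    using j j1 ieq assms \<open>\<not> i' + j < n\<close> by (auto intro!: arg_cong[where f="\<lambda>x. x mod n"])
  moreover have "p \<notin> win n k i"
  proof
    assume "p \<in> win n k i"
    then obtain j'' where "j'' < k" "p = (i + j'') mod n" by (auto simp: win_mem)
    then have "(n - 1) mod n = j'' mod n" using add_mod_cancel[of i "n-1" n j''] p_def by simp
    then show False using \<open>j'' < k\<close> assms by simp
  qed
  ultimately show False using assms by simp
qed

lemma win_inj: assumes "0 < k" "k < n" shows "inj_on (win n k) {0..<n}"
proof (rule inj_onI)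
  fix i i' assume i: "i \<in> {0..<n}" "i' \<in> {0..<n}" and eq: "win n k i = win n k i'"
  show "i = i'"
  proof (rule ccontr)
    assume "i \<noteq> i'"
    then have "i < i' \<or> i' < i" by linarith
    then show False using win_inj_aux[OF assms] i eq by auto
  qed
qed

lemma card_rows: assumes "0 < k" "k < n" shows "card (win n k ` {0..<n}) = n"
  using win_inj[OF assms] by (simp add: card_image)

lemma win_shift:
  assumes "\<forall>j<i. (a + j) mod n \<notin> C"
  shows "win n k a \<inter> C \<subseteq> win n k (a + i)"
proof
  fix x assume "x \<in> win n k a \<inter> C"
  then obtain j where j: "j < k" "x = (a + j) mod n" "x \<in> C" by (auto simp: win_mem)
  then have "j \<ge> i" using assms by (meson not_le)
  then show "x \<in> win n k (a + i)" unfolding win_mem using j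
    by (intro exI[of _ "j - i"]) auto
qed



lemma necessity:
  fixes s k n' k' :: nat and N :: "nat set"
  assumes s: "s > 0" and k: "k > 0" and kk: "0 < k'" "k' < n'"
    and N: "N \<subseteq> {0..<s*k}"
    and iso: "iso01 (contract (circ (s*k) k) N) (circ n' k')"
  shows "s*k' \<le> n' \<and> n' \<le> k' + (s-1)*(k'+1)"
proof -
  define n where "n = s*k"
  have n0: "0 < n" using s k by (simp add: n_def)
  have kn: "k \<le> n" using s by (simp add: n_def)
  define C where "C = {0..<n} - N"
  define R where "R = (\<lambda>v. v - N) ` win n k ` {0..<n}"
  define M where "M = {v \<in> R. \<not>(\<exists>u\<in>R. u \<noteq> v \<and> u \<subseteq> v)}"
  have con: "contract (circ n k) N = (C, M)"
    unfolding contract_def circ_rows circ_cols C_def R_def M_def Let_def by simp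
  from iso obtain f where bij: "bij_betw f C {0..<n'}"
      and img: "(\<lambda>v. f ` v) ` M = win n' k' ` {0..<n'}"
    unfolding iso01_def n_def[symmetric] con circ_rows circ_cols by auto
  have cardC: "card C = n'" using bij_betw_same_card[OF bij] by simp
  have finC: "finite C" by (simp add: C_def)
  have Cne: "C \<noteq> {}" using cardC kk by auto
  have winC: "\<And>a. win n k a - N = win n k a \<inter> C"
    using win_sub[OF n0] unfolding C_def by blast
  have inR: "\<And>a. win n k a - N \<in> R"
  proof -
    fix a
    have "win n k a - N = win n k (a mod n) - N" by (simp add: win_mod)
    then show "win n k a - N \<in> R" unfolding R_def using n0 by auto
  qed
  have RsubC: "\<forall>v\<in>R. v \<subseteq> C" unfolding R_def C_def using win_sub[OF n0] by blast
  have MR: "M \<subseteq> R" unfolding M_def by blast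
  have finR: "finite R" unfolding R_def by simp
  have injf: "inj_on f C" using bij by (simp add: bij_betw_def)
  have cardM_elem: "\<forall>u\<in>M. card u = k'"
  proof
    fix u assume u: "u \<in> M"
    then have "f ` u \<in> win n' k' ` {0..<n'}" using img by blast
    then have "card (f ` u) = k'" using card_win kk by auto
    moreover have "inj_on f u" using injf RsubC MR u by (meson inj_on_subset subsetD)
    ultimately show "card u = k'" by (simp add: card_image)
  qed
  have cardM: "card M = n'"
  proof -
    have "inj_on (\<lambda>v. f ` v) M"
    proof (rule inj_onI)
      fix u v assume "u \<in> M" "v \<in> M" "f ` u = f ` v"
      then show "u = v" using inj_on_image_eq_iff[OF injf] RsubC MR by blast
    qed
    then have "card M = card (win n' k' ` {0..<n'})" using img card_image by metis
    then show ?thesis using card_rows kk by simp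
  qed
  have Wmin: "\<And>a. \<exists>u\<in>M. u \<subseteq> win n k a - N"
  proof -
    fix a
    obtain m where m: "m \<in> R" "m \<le> win n k a - N" "\<forall>b\<in>R. b \<le> m \<longrightarrow> m = b"
      using finite_has_minimal2[OF finR inR[of a]] by blast
    then have "m \<in> M" unfolding M_def by blast
    then show "\<exists>u\<in>M. u \<subseteq> win n k a - N" using m by blast
  qed
  have lower: "\<And>a. k' \<le> card (win n k a - N)"
  proof -
    fix a
    obtain u where "u \<in> M" "u \<subseteq> win n k a - N" using Wmin by blast
    then show "k' \<le> card (win n k a - N)"
      using cardM_elem card_mono[OF finite_Diff[OF fin_win]] by metis
  qed
  have G: "\<forall>u\<in>M. \<exists>d\<in>C. u = win n k (d+1) - N"
  proof
    fix u assume uM: "u \<in> M"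
    then obtain b where b: "b < n" "u = win n k b - N" using MR unfolding R_def by auto
    define \<delta> where "\<delta> = (\<lambda>d. (b + n - 1 - d) mod n)"
    obtain d0 where "d0 \<in> C" using Cne by blast
    obtain d where d: "d \<in> C" "\<forall>d'. d' \<in> C \<longrightarrow> \<delta> d \<le> \<delta> d'"
      using ex_has_least_nat[of "\<lambda>d. d \<in> C" d0 \<delta>] \<open>d0 \<in> C\<close> by blast
    have dn: "d < n" using d C_def by auto
    define t where "t = \<delta> d"
    have gap: "\<forall>j<t. (d + 1 + j) mod n \<notin> C"
    proof (intro allI impI)
      fix j assume jt: "j < t"
      show "(d + 1 + j) mod n \<notin> C"
      proof
        define e where "e = (d + 1 + j) mod n"
        assume "(d + 1 + j) mod n \<in> C"
        then have eC: "e \<in> C" by (simp add: e_def)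
        have en: "e < n" using n0 by (simp add: e_def)
        have tn: "t < n" using n0 by (simp add: t_def \<delta>_def)
        have "((t - 1 - j) + e) mod n = ((t - 1 - j) + (d + 1 + j)) mod n"
          by (simp add: e_def mod_add_right_eq)
        also have "\<dots> = (t + d) mod n" using jt by (simp add: algebra_simps)
        also have "\<dots> = ((b + n - 1 - d) + d) mod n" by (simp add: t_def \<delta>_def mod_add_left_eq)
        also have "\<dots> = ((b + n - 1 - e) + e) mod n" using dn en by simp
        finally have "((t - 1 - j) + e) mod n = ((b + n - 1 - e) + e) mod n" .
        then have "(t - 1 - j) mod n = (b + n - 1 - e) mod n"
          using add_mod_cancel[of e "t-1-j" n "b+n-1-e"] by (simp add: add.commute)
        then have "\<delta> e = t - 1 - j" using tn by (simp add: \<delta>_def)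
        then have "\<delta> e < \<delta> d" using jt t_def by simp
        then show False using d eC by (meson not_le)
      qed
    qed
    have "win n k (d + 1) \<inter> C \<subseteq> win n k (d + 1 + t)"
      using win_shift[of t "d+1" n C k] gap by simp
    moreover have "(d + 1 + t) mod n = b"
    proof -
      have "(d + 1 + t) mod n = ((d + 1) + (b + n - 1 - d) mod n) mod n"
        unfolding t_def \<delta>_def by (rule refl)
      also have "\<dots> = (d + 1 + (b + n - 1 - d)) mod n"
        by (rule mod_add_right_eq)
      also have "\<dots> = (b + n) mod n" using dn by simp
      finally show ?thesis using b by simp
    qed
    ultimately have "win n k (d + 1) \<inter> C \<subseteq> win n k b" using win_mod by metis
    then have sub: "win n k (d+1) - N \<subseteq> u" using b winC by blast
    obtain u' where u': "u' \<in> M" "u' \<subseteq> win n k (d+1) - N" using Wmin by blast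
    then have "u' = u" using uM sub MR unfolding M_def by blast
    then have "u = win n k (d+1) - N" using u' sub by blast
    then show "\<exists>d\<in>C. u = win n k (d+1) - N" using d by blast
  qed
  have MG: "M = (\<lambda>d. win n k (d+1) - N) ` C"
  proof (rule card_seteq)
    show "finite ((\<lambda>d. win n k (d+1) - N) ` C)" using finC by simp
    show "M \<subseteq> (\<lambda>d. win n k (d+1) - N) ` C" using G by blast
    show "card ((\<lambda>d. win n k (d+1) - N) ` C) \<le> card M"
      using card_image_le[OF finC] cardM cardC by metis
  qed
  have exact: "\<forall>d\<in>C. card (win n k (d+1) - N) = k'"
    using MG cardM_elem by auto
  have upper: "\<And>a. card (win n k a - N) \<le> k' + 1"
  proof -
    fix a
    show "card (win n k a - N) \<le> k' + 1"
    proof (cases "win n k a - N = {}")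
      case True then show ?thesis by (simp only: card.empty)
    next
      case False
      then obtain j where j: "j < k" "(a + j) mod n \<in> C" using winC by (auto simp: win_mem)
      define j0 where "j0 = (LEAST j. j < k \<and> (a + j) mod n \<in> C)"
      have j0: "j0 < k" "(a + j0) mod n \<in> C" using LeastI[of "\<lambda>j. j < k \<and> (a + j) mod n \<in> C" j] j
        by (auto simp: j0_def)
      have j0le: "\<And>j. j < k \<Longrightarrow> (a + j) mod n \<in> C \<Longrightarrow> j0 \<le> j"
        unfolding j0_def by (simp add: Least_le)
      define x1 where "x1 = (a + j0) mod n"
      have "win n k a - N \<subseteq> insert x1 (win n k (x1 + 1) - N)"
      proof
        fix y assume "y \<in> win n k a - N"
        then obtain jj where jj: "jj < k" "y = (a + jj) mod n" "y \<in> C" using winC by (auto simp: win_mem)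
        show "y \<in> insert x1 (win n k (x1 + 1) - N)"
        proof (cases "jj = j0")
          case True then show ?thesis using jj x1_def by simp
        next
          case False
          then have "j0 < jj" using j0le jj by force
          have "(x1 + 1 + (jj - j0 - 1)) mod n = ((a + j0) mod n + (jj - j0)) mod n"
          proof -
            have "x1 + 1 + (jj - j0 - 1) = x1 + (jj - j0)" using \<open>j0 < jj\<close> by linarith
            then show ?thesis unfolding x1_def by (simp only:)
          qed
          also have "\<dots> = (a + j0 + (jj - j0)) mod n" by (rule mod_add_left_eq)
          also have "\<dots> = y" using jj \<open>j0 < jj\<close> by simp
          finally have "y = (x1 + 1 + (jj - j0 - 1)) mod n" by simp
          then have "y \<in> win n k (x1 + 1)" unfolding win_mem using jj by (intro exI[of _ "jj - j0 - 1"]) auto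
          then show ?thesis using jj winC by blast
        qed
      qed
      then have "card (win n k a - N) \<le> card (insert x1 (win n k (x1 + 1) - N))"
        by (intro card_mono) (auto simp: fin_win)
      also have "\<dots> \<le> Suc (card (win n k (x1 + 1) - N))" by (simp add: card_insert_le_m1 card_insert_if)
      also have "\<dots> = k' + 1" using exact j0 x1_def by simp
      finally show ?thesis .
    qed
  qed
  have part: "\<And>a0. card C = (\<Sum>t<s. card (win n k (a0 + t*k) - N))"
  proof -
    fix a0
    have bound: "\<And>t j. t < s \<Longrightarrow> j < k \<Longrightarrow> t*k + j < n"
    proof -
      fix t j assume "t < s" "j < k"
      then have "t*k + j < t*k + k" by simp
      also have "\<dots> = (t+1)*k" by simp
      also have "\<dots> \<le> s*k" using \<open>t<s\<close> by (intro mult_le_mono1) simp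
      finally show "t*k + j < n" by (simp add: n_def)
    qed
    have eqU: "C = (\<Union>t\<in>{..<s}. win n k (a0 + t*k) - N)"
    proof
      show "C \<subseteq> (\<Union>t\<in>{..<s}. win n k (a0 + t*k) - N)"
      proof
        fix x assume xC: "x \<in> C"
        then have xn: "x < n" by (simp add: C_def)
        define q where "q = (x + n - a0 mod n) mod n"
        have qn: "q < n" using n0 by (simp add: q_def)
        have tq: "q div k < s" using qn by (simp add: n_def less_mult_imp_div_less)
        have "(a0 + (q div k)*k + q mod k) mod n = (a0 + q) mod n" by (simp add: add.commute)
        also have "\<dots> = (a0 mod n + (x + n - a0 mod n)) mod n"
          by (simp add: q_def mod_add_left_eq mod_add_right_eq)
        also have "\<dots> = (x + n) mod n" proof - have "a0 mod n < n" using n0 by simp then have "a0 mod n + (x + n - a0 mod n) = x + n" by linarith then show ?thesis by (simp only:) qed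
        also have "\<dots> = x" using xn by simp
        finally have "x \<in> win n k (a0 + (q div k) * k)" unfolding win_mem using k
          by (intro exI[of _ "q mod k"]) (simp add: add.assoc)
        then show "x \<in> (\<Union>t\<in>{..<s}. win n k (a0 + t*k) - N)" using tq xC C_def by blast
      qed
      show "(\<Union>t\<in>{..<s}. win n k (a0 + t*k) - N) \<subseteq> C" using winC by blast
    qed
    have disj: "\<forall>t\<in>{..<s}. \<forall>t'\<in>{..<s}. t \<noteq> t' \<longrightarrow>
        (win n k (a0 + t*k) - N) \<inter> (win n k (a0 + t'*k) - N) = {}"
    proof (intro ballI impI)
      fix t t' assume tt: "t \<in> {..<s}" "t' \<in> {..<s}" "t \<noteq> t'"
      show "(win n k (a0 + t*k) - N) \<inter> (win n k (a0 + t'*k) - N) = {}"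
      proof (rule ccontr)
        assume "\<not> ?thesis"
        then obtain j j' where jj: "j < k" "j' < k" "(a0 + t*k + j) mod n = (a0 + t'*k + j') mod n"
          by (auto simp: win_mem)
        then have "(t*k + j) mod n = (t'*k + j') mod n"
          using add_mod_cancel[of a0 "t*k+j" n "t'*k+j'"] by (simp add: add.assoc)
        then have "t*k + j = t'*k + j'" using bound tt jj by simp
        then have "(t*k + j) div k = (t'*k + j') div k" by simp
        then have "t = t'" using jj k by simp
        then show False using tt by simp
      qed
    qed
    show "card C = (\<Sum>t<s. card (win n k (a0 + t*k) - N))"
      by (subst eqU, rule card_UN_disjoint) (use disj in \<open>auto simp: fin_win\<close>)
  qed
  obtain d where dC: "d \<in> C" using Cne by blast
  obtain s' where s': "s = Suc s'" using s by (cases s) auto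
  have "n' = (\<Sum>t<s. card (win n k (d + 1 + t*k) - N))" using part cardC by metis
  also have "\<dots> = card (win n k (d + 1) - N) + (\<Sum>t<s'. card (win n k (d + 1 + Suc t*k) - N))"
    unfolding s' sum.lessThan_Suc_shift by simp
  also have "\<dots> \<le> k' + s' * (k' + 1)"
    using exact dC sum_bounded_above[of "{..<s'}" "\<lambda>t. card (win n k (d + 1 + Suc t*k) - N)" "k'+1"] upper
    by simp
  finally have up: "n' \<le> k' + (s-1)*(k'+1)" using s' by simp
  have "s * k' \<le> (\<Sum>t<s. card (win n k (0 + t*k) - N))"
    using sum_bounded_below[of "{..<s}" k' "\<lambda>t. card (win n k (0 + t*k) - N)"] lower by simp
  then have "s * k' \<le> n'" using part cardC by metis
  then show ?thesis using up by simp
qed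



lemma sufficiency:
  fixes h n' k' r :: nat
  assumes h: "h \<ge> 1" and r: "1 \<le> r" "r < h" "r < k'" and n': "n' = h*k' + r"
  shows "has_minor_iso (circ (h*n') n') (circ n' k')"
proof -
  define n where "n = h*n'"
  have n'0: "0 < n'" using n' r by simp
  have n0: "0 < n" using n'0 h by (simp add: n_def)
  have "k' \<le> h*k'" using h by simp
  then have kn': "k' < n'" using n' r by linarith
  define g where "g = (\<lambda>i::nat. i*h)"
  define C where "C = g ` {0..<n'}"
  define N where "N = {0..<n} - C"
  have gC: "\<And>i. i < n' \<Longrightarrow> g i < n"
    using h by (simp add: g_def n_def)
  have Csub: "C \<subseteq> {0..<n}" using gC by (auto simp: C_def)
  have CN: "{0..<n} - N = C" using Csub by (auto simp: N_def)
  have injg: "inj g" using h by (auto simp: g_def inj_on_def)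
  define R where "R = (\<lambda>v. v - N) ` win n n' ` {0..<n}"
  define M where "M = {v \<in> R. \<not>(\<exists>u\<in>R. u \<noteq> v \<and> u \<subseteq> v)}"
  define T where "T = (\<lambda>v. g ` v) ` win n' k' ` {0..<n'}"
  have con: "contract (circ n n') N = (C, M)"
    unfolding contract_def circ_rows circ_cols CN R_def M_def Let_def by simp
  have winC: "\<And>a. win n n' a - N = win n n' a \<inter> C"
    using win_sub[OF n0] unfolding N_def by blast
  have modh: "\<And>m. (m*h) mod n = (m mod n') * h"
    by (simp add: n_def mult.commute[of h n'] mod_mult_mult2)
  have I1: "\<And>a. \<exists>q<n'. g ` win n' k' q \<subseteq> win n n' a - N"
  proof -
    fix a
    define Q where "Q = (a + h - 1) div h"
    have Q1: "a \<le> Q*h"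
    proof -
      have "(a + h - 1) mod h < h" using h by simp
      moreover have "Q*h + (a + h - 1) mod h = a + h - 1" unfolding Q_def by (rule div_mult_mod_eq)
      ultimately show ?thesis using h by linarith
    qed
    have Q2: "Q*h \<le> a + h - 1"
    proof -
      have "Q*h + (a + h - 1) mod h = a + h - 1" unfolding Q_def by (rule div_mult_mod_eq)
      then show ?thesis by linarith
    qed
    show "\<exists>q<n'. g ` win n' k' q \<subseteq> win n n' a - N"
    proof (intro exI conjI)
      show "Q mod n' < n'" using n'0 by simp
      show "g ` win n' k' (Q mod n') \<subseteq> win n n' a - N"
      proof
        fix x assume "x \<in> g ` win n' k' (Q mod n')"
        then obtain t where t: "t < k'" "x = g ((Q mod n' + t) mod n')" by (auto simp: win_mem)
        then have x: "x = ((Q + t) mod n') * h" by (simp add: g_def mod_add_left_eq)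
        have "(t + 1) * h \<le> k' * h" using t by (intro mult_le_mono1) simp
        then have th: "t*h + h \<le> k'*h" by simp
        have e: "(Q + t)*h = Q*h + t*h" by (simp add: add_mult_distrib)
        have e2: "h*k' = k'*h" by (simp add: mult.commute)
        have jlt: "(Q + t)*h - a < n'"
          using Q2 th n' h e e2 r by linarith
        have "(a + ((Q + t)*h - a)) mod n = ((Q+t)*h) mod n"
          using Q1 by (simp add: add_mult_distrib)
        then have "x \<in> win n n' a" unfolding win_mem x modh using jlt
          by (intro exI[of _ "(Q + t)*h - a"]) simp
        moreover have "x \<in> C" using x n'0 by (auto simp: C_def g_def)
        ultimately show "x \<in> win n n' a - N" using winC by blast
      qed
    qed
  qed
  have F2: "\<And>q. q < n' \<Longrightarrow> win n n' ((q*h + n - r) mod n) - N = g ` win n' k' q"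
  proof -
    fix q assume qn: "q < n'"
    define a where "a = (q*h + n - r) mod n"
    have "n' \<le> n" using h by (simp add: n_def)
    then have rn: "r \<le> n" using n' by linarith
    have key: "\<And>t. ((q*h + n - r) + (r + t*h)) mod n = ((q + t) mod n') * h"
    proof -
      fix t
      have "(q*h + n - r) + (r + t*h) = (q + t)*h + n" using rn by (simp add: add_mult_distrib)
      then show "((q*h + n - r) + (r + t*h)) mod n = ((q + t) mod n') * h"
        using modh by simp
    qed
    show "win n n' a - N = g ` win n' k' q"
      unfolding a_def[symmetric]
    proof
      show "g ` win n' k' q \<subseteq> win n n' a - N"
      proof
        fix x assume "x \<in> g ` win n' k' q"
        then obtain t where t: "t < k'" "x = g ((q + t) mod n')" by (auto simp: win_mem)
        have "(t + 1) * h \<le> k' * h" using t by (intro mult_le_mono1) simp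
        then have "t*h + h \<le> h*k'" by (simp add: mult.commute)
        then have jlt: "r + t*h < n'" using n' r by linarith
        have "(a + (r + t*h)) mod n = x"
          unfolding a_def mod_add_left_eq key t g_def by simp
        then have "x \<in> win n n' a" unfolding win_mem using jlt by (intro exI[of _ "r + t*h"]) simp
        moreover have "x \<in> C" using t n'0 by (auto simp: C_def)
        ultimately show "x \<in> win n n' a - N" using winC by blast
      qed
      show "win n n' a - N \<subseteq> g ` win n' k' q"
      proof
        fix x assume "x \<in> win n n' a - N"
        then obtain j i where j: "j < n'" "x = (a + j) mod n" "i < n'" "x = i*h"
          using winC by (auto simp: win_mem C_def g_def)
        define X where "X = q*h + n - r + j"
        have Xm: "X mod n = i*h" using j unfolding X_def a_def by (simp add: mod_add_left_eq)
        have hn: "h dvd n" by (simp add: n_def)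
        have "h dvd X"
        proof -
          have "X = n * (X div n) + i*h" using Xm mult_div_mod_eq[of n X] by simp
          then show ?thesis using hn by (metis dvd_add dvd_mult2 dvd_triv_right)
        qed
        have a1: "(q + n' - 1)*h + h = q*h + n"
        proof -
          have "(q + n' - 1)*h + h = (q + n' - 1 + 1)*h" by simp
          also have "q + n' - 1 + 1 = q + n'" using n'0 by simp
          finally show ?thesis by (simp add: n_def algebra_simps)
        qed
        have Xe: "X = (q + n' - 1)*h + (h - r + j)"
          using rn r a1 unfolding X_def by linarith
        have d1: "h dvd (h - r + j)" using \<open>h dvd X\<close> Xe by (simp add: dvd_add_right_iff)
        have jr: "r \<le> j"
        proof (rule ccontr)
          assume "\<not> r \<le> j"
          then have "0 < h - r + j" "h - r + j < h" using r by auto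
          then show False using d1 by (meson nat_dvd_not_less)
        qed
        have "h dvd (h + (j - r))" proof -
          have "h - r + j = h + (j - r)" using jr r by linarith
          then show ?thesis using d1 by simp
        qed
        then have "h dvd (j - r)" by simp
        then obtain t where t: "j - r = h * t" by blast
        have "h*t < h*k'" using t j n' jr by linarith
        then have tk: "t < k'" by simp
        have "x = ((q + t) mod n') * h"
        proof -
          have "j = r + t*h" using t jr by (simp add: mult.commute)
          then show ?thesis using j key unfolding a_def by (simp add: mod_add_left_eq)
        qed
        moreover have "(q + t) mod n' \<in> win n' k' q" unfolding win_mem using tk by blast
        ultimately show "x \<in> g ` win n' k' q" unfolding g_def by blast
      qed
    qed
  qed
  have F2': "\<And>q. q < n' \<Longrightarrow> g ` win n' k' q \<in> R"
  proof -
    fix q assume "q < n'"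
    then have "g ` win n' k' q = win n n' ((q*h + n - r) mod n) - N" using F2 by simp
    moreover have "(q*h + n - r) mod n < n" using n0 by simp
    ultimately show "g ` win n' k' q \<in> R" unfolding R_def image_image
      by (intro image_eqI[where x="(q*h + n - r) mod n"]) auto
  qed
  have F3: "\<And>q. card (g ` win n' k' q) = k'"
    using card_win[of k' n'] kn' injg by (simp add: card_image inj_on_subset)
  have TR: "T \<subseteq> R" using F2' unfolding T_def by auto
  have finT: "\<And>t. t \<in> T \<Longrightarrow> finite t" unfolding T_def by (auto simp: fin_win)
  have cardT: "\<And>t. t \<in> T \<Longrightarrow> card t = k'" unfolding T_def using F3 by auto
  have RT: "\<And>v. v \<in> R \<Longrightarrow> \<exists>t\<in>T. t \<subseteq> v"
  proof -
    fix v assume "v \<in> R"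
    then obtain a where "v = win n n' a - N" unfolding R_def by auto
    moreover obtain q where "q < n'" "g ` win n' k' q \<subseteq> win n n' a - N" using I1[of a] by blast
    ultimately show "\<exists>t\<in>T. t \<subseteq> v" unfolding T_def image_image
      by (intro bexI[where x="g ` win n' k' q"]) auto
  qed
  have MT: "M = T"
  proof
    show "M \<subseteq> T"
    proof
      fix v assume "v \<in> M"
      then have vR: "v \<in> R" and vmin: "\<not>(\<exists>u\<in>R. u \<noteq> v \<and> u \<subseteq> v)" unfolding M_def by auto
      obtain t where "t \<in> T" "t \<subseteq> v" using RT[OF vR] by blast
      then have "t = v" using vmin TR by blast
      then show "v \<in> T" using \<open>t \<in> T\<close> by simp
    qed
    show "T \<subseteq> M"
    proof
      fix t assume tT: "t \<in> T"
      have "\<not>(\<exists>u\<in>R. u \<noteq> t \<and> u \<subseteq> t)"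
      proof
        assume "\<exists>u\<in>R. u \<noteq> t \<and> u \<subseteq> t"
        then obtain u where u: "u \<in> R" "u \<noteq> t" "u \<subseteq> t" by blast
        obtain t' where t': "t' \<in> T" "t' \<subseteq> u" using RT[OF u(1)] by blast
        have "t' \<subseteq> t" using t' u by blast
        moreover have "card t' = card t" using cardT t'(1) tT by simp
        ultimately have "t' = t" using card_subset_eq[OF finT[OF tT]] by blast
        then show False using t' u by blast
      qed
      then show "t \<in> M" using tT TR unfolding M_def by blast
    qed
  qed
  define f where "f = (\<lambda>x::nat. x div h)"
  have fg: "\<And>i. f (g i) = i" using h by (simp add: f_def g_def)
  have bij: "bij_betw f C {0..<n'}"
  proof (rule bij_betw_imageI)
    show "inj_on f C" unfolding C_def by (rule inj_onI) (auto simp: fg)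
    show "f ` C = {0..<n'}" unfolding C_def image_image fg by simp
  qed
  have img: "(\<lambda>v. f ` v) ` M = win n' k' ` {0..<n'}"
    unfolding MT T_def image_image fg by simp
  have "iso01 (contract (circ n n') N) (circ n' k')"
    unfolding iso01_def con circ_rows circ_cols using bij img by auto
  moreover have "N \<subseteq> fst (circ n n')" by (auto simp: N_def circ_cols)
  ultimately show ?thesis unfolding has_minor_iso_def n_def by blast
qed


theorem mainTheorem3:
  fixes k' h r n' :: nat
  assumes "k' \<ge> 2" and "h \<ge> 1" and "1 \<le> r" and "r \<le> k' - 1" and "n' = h * k' + r"
  shows "(\<exists>s k. s > 0 \<and> k > 0 \<and> has_minor_iso (circ (s * k) k) (circ n' k'))
         \<longleftrightarrow> r \<le> h - 1"
proof
  assume "\<exists>s k. s > 0 \<and> k > 0 \<and> has_minor_iso (circ (s * k) k) (circ n' k')"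
  then obtain s k N where sk: "s > 0" "k > 0" and N: "N \<subseteq> {0..<s*k}"
    and iso: "iso01 (contract (circ (s*k) k) N) (circ n' k')"
    unfolding has_minor_iso_def circ_cols by blast
  have "k' \<le> h*k'" using assms by simp
  then have kn: "k' < n'" using assms by linarith
  have k0: "0 < k'" using assms by simp
  from necessity[OF sk k0 kn N iso]
  have A: "s*k' \<le> n'" and B: "n' \<le> k' + (s-1)*(k'+1)" by auto
  have sh: "s \<le> h"
  proof (rule ccontr)
    assume "\<not> s \<le> h"
    then have "(h+1)*k' \<le> s*k'" by (intro mult_le_mono1) simp
    then show False using A assms by (simp add: algebra_simps)
  qed
  have "k' + (s-1)*(k'+1) = s*k' + (s - 1)"
  proof -
    obtain s' where "s = Suc s'" using sk by (cases s) auto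
    then show ?thesis by (simp add: algebra_simps)
  qed
  moreover have "s*k' \<le> h*k'" using sh by (intro mult_le_mono1)
  ultimately show "r \<le> h - 1" using B assms sh by linarith
next
  assume rh: "r \<le> h - 1"
  have "has_minor_iso (circ (h*n') n') (circ n' k')"
    by (rule sufficiency) (use assms rh in auto)
  moreover have "0 < n'" using assms by simp
  ultimately show "\<exists>s k. s > 0 \<and> k > 0 \<and> has_minor_iso (circ (s * k) k) (circ n' k')"
    using assms(2) by (intro exI[of _ h] exI[of _ n']) simp
qed

end
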